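(* For every integer $N\ge 0$, let $T_{1\times 4}(5,N)$ be the number of tilings of a $5\times n$ rectangle, $n=4N/5$, by $N$ tiles of size $1\times 4$ (and $0$ if $4N/5\notin\mathbb{Z}$). Then, as formal power series, \[ \sum_{N\ge 0} T_{1\times 4}(5,N)\,z^N=\frac{(1-z^5)^3}{1-6z^5+6z^{10}-4z^{15}+z^{20}}. \]
   Context: A tiling of an $m\times n$ rectangle (width $m$, length $n$, made of $mn$ unit squares) by $a\times b$ tiles is a partition of the rectangle into non-overlapping axis-parallel $a\times b$ rectangles with integer corner coordinates, each placed in either of its two orientations. Tilings related by reflections or rotations of the rectangle are counted as distinct. The empty tiling counts once for $N=0$. *)

theory Defs
  imports Main "HOL-Computational_Algebra.Formal_Power_Series"
begin

(* Unit cells are pairs (i,j) of naturals; cell (i,j) is the unit square [i,i+1]x[j,j+1]. *)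

definition rect_cells :: "nat \<Rightarrow> nat \<Rightarrow> nat \<Rightarrow> nat \<Rightarrow> (nat \<times> nat) set" where
  "rect_cells x y w h = {x..<x+w} \<times> {y..<y+h}"

definition board :: "nat \<Rightarrow> nat \<Rightarrow> (nat \<times> nat) set" where
  "board m n = rect_cells 0 0 m n"

definition is_tile :: "nat \<Rightarrow> nat \<Rightarrow> (nat \<times> nat) set \<Rightarrow> bool" where
  "is_tile a b t \<longleftrightarrow> (\<exists>x y. t = rect_cells x y a b \<or> t = rect_cells x y b a)"

definition is_tiling :: "nat \<Rightarrow> nat \<Rightarrow> nat \<Rightarrow> nat \<Rightarrow> (nat \<times> nat) set set \<Rightarrow> bool" where
  "is_tiling a b m n T \<longleftrightarrow>
     (\<forall>t\<in>T. is_tile a b t) \<and>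
     (\<forall>t\<in>T. \<forall>t'\<in>T. t \<noteq> t' \<longrightarrow> t \<inter> t' = {}) \<and>
     \<Union>T = board m n"

definition T14_5 :: "nat \<Rightarrow> nat" where
  "T14_5 N = (if 5 dvd (4 * N)
      then card {T. is_tiling 1 4 5 (4 * N div 5) T \<and> card T = N}
      else 0)"

end

theory Submission
  imports Defs
begin


definition til :: "(nat \<times> nat) set \<Rightarrow> (nat \<times> nat) set set set" where
  "til S = {T. (\<forall>t\<in>T. is_tile 1 4 t) \<and> (\<forall>t\<in>T. \<forall>t'\<in>T. t \<noteq> t' \<longrightarrow> t \<inter> t' = {}) \<and> \<Union>T = S}"

lemma til_finite: "finite S \<Longrightarrow> finite (til S)"
proof -
  assume f: "finite S"
  have "til S \<subseteq> Pow (Pow S)" unfolding til_def by auto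
  moreover have "finite (Pow (Pow S))" using f by simp
  ultimately show ?thesis by (rule finite_subset)
qed

lemma card_tile0: "is_tile 1 4 t \<Longrightarrow> card t = 4"
  unfolding is_tile_def rect_cells_def by (auto simp: card_cartesian_product)

lemma tile_ne: "is_tile 1 4 t \<Longrightarrow> t \<noteq> {}"
  using card_tile0 by fastforce

lemma til_empty: "til {} = {{}}"
  unfolding til_def using tile_ne by auto

lemma til_split:
  assumes fS: "finite S" and cS: "c \<in> S"
  shows "card (til S) = (\<Sum>t\<in>{t. is_tile 1 4 t \<and> c \<in> t \<and> t \<subseteq> S}. card (til (S - t)))"
proof -
  define C where "C = {t. is_tile 1 4 t \<and> c \<in> t \<and> t \<subseteq> S}"
  have eq: "til S = (\<Union>t\<in>C. insert t ` til (S - t))"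
  proof
    show "til S \<subseteq> (\<Union>t\<in>C. insert t ` til (S - t))"
    proof
      fix T assume T: "T \<in> til S"
      then have cU: "c \<in> \<Union>T" using cS unfolding til_def by auto
      then obtain t where tT: "t \<in> T" and ct: "c \<in> t" by auto
      have tC: "t \<in> C" using T tT ct unfolding til_def C_def by auto
      have Tp: "(\<forall>t\<in>T. is_tile 1 4 t) \<and> (\<forall>t\<in>T. \<forall>t'\<in>T. t \<noteq> t' \<longrightarrow> t \<inter> t' = {}) \<and> \<Union>T = S"
        using T unfolding til_def by simp
      have "\<Union>(T - {t}) = S - t"
      proof
        show "\<Union>(T - {t}) \<subseteq> S - t" using Tp tT by blast
        show "S - t \<subseteq> \<Union>(T - {t})" using Tp by blast
      qed
      then have "T - {t} \<in> til (S - t)"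
        using Tp unfolding til_def by auto
      moreover have "T = insert t (T - {t})" using tT by auto
      ultimately show "T \<in> (\<Union>t\<in>C. insert t ` til (S - t))" using tC by blast
    qed
  next
    show "(\<Union>t\<in>C. insert t ` til (S - t)) \<subseteq> til S"
    proof
      fix T assume "T \<in> (\<Union>t\<in>C. insert t ` til (S - t))"
      then obtain t T' where tC: "t \<in> C" and T': "T' \<in> til (S - t)" and TT: "T = insert t T'" by auto
      have T'p: "(\<forall>t\<in>T'. is_tile 1 4 t) \<and> (\<forall>t\<in>T'. \<forall>t'\<in>T'. t \<noteq> t' \<longrightarrow> t \<inter> t' = {}) \<and> \<Union>T' = S - t"
        using T' unfolding til_def by simp
      have tp: "is_tile 1 4 t" "t \<subseteq> S" using tC unfolding C_def by auto
      have dj: "t \<inter> t' = {}" if "t' \<in> T'" for t'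
        using T'p that by auto
      have "\<Union>T = S" using T'p tp TT by auto
      moreover have "\<forall>t\<in>T. is_tile 1 4 t" using T'p tp TT by auto
      moreover have "\<forall>u\<in>T. \<forall>u'\<in>T. u \<noteq> u' \<longrightarrow> u \<inter> u' = {}"
        using T'p dj TT by blast
      ultimately show "T \<in> til S" unfolding til_def by simp
    qed
  qed
  have finC: "finite C"
  proof -
    have "C \<subseteq> Pow S" unfolding C_def by auto
    then show ?thesis using fS finite_subset by blast
  qed
  have notin: "t \<notin> T'" if "t \<in> C" "T' \<in> til (S - t)" for t T'
  proof
    assume "t \<in> T'"
    then have "t \<subseteq> S - t" using that(2) unfolding til_def by auto
    moreover have "c \<in> t" using that(1) unfolding C_def by auto
    ultimately show False by auto
  qed
  have inj: "inj_on (insert t) (til (S - t))" if "t \<in> C" for t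
  proof (rule inj_onI)
    fix A B assume A: "A \<in> til (S - t)" and B: "B \<in> til (S - t)" and e: "insert t A = insert t B"
    have "t \<notin> A" "t \<notin> B" using notin[OF that A] notin[OF that B] .
    then show "A = B" using e by (metis insert_ident)
  qed
  have disj: "\<forall>t\<in>C. \<forall>t'\<in>C. t \<noteq> t' \<longrightarrow> insert t ` til (S - t) \<inter> insert t' ` til (S - t') = {}"
  proof (intro ballI impI)
    fix t t' assume tC: "t \<in> C" and t'C: "t' \<in> C" and ne: "t \<noteq> t'"
    show "insert t ` til (S - t) \<inter> insert t' ` til (S - t') = {}"
    proof (rule ccontr)
      assume "insert t ` til (S - t) \<inter> insert t' ` til (S - t') \<noteq> {}"
      then obtain A B where A: "A \<in> til (S - t)" and B: "B \<in> til (S - t')" and e: "insert t A = insert t' B" by auto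
      then have "t \<in> B" using ne by auto
      then have "t \<subseteq> S - t'" using B unfolding til_def by auto
      moreover have "c \<in> t" "c \<in> t'" using tC t'C unfolding C_def by auto
      ultimately show False by auto
    qed
  qed
  have "card (til S) = (\<Sum>t\<in>C. card (insert t ` til (S - t)))"
    unfolding eq
    by (rule card_UN_disjoint[OF finC _ disj]) (use fS til_finite in auto)
  also have "\<dots> = (\<Sum>t\<in>C. card (til (S - t)))"
    by (rule sum.cong) (auto intro: card_image inj)
  finally show ?thesis unfolding C_def .
qed

lemma card_tile: "is_tile 1 4 t \<Longrightarrow> card t = 4"
  unfolding is_tile_def rect_cells_def by (auto simp: card_cartesian_product)

lemma til_card:
  assumes "finite S" "T \<in> til S" shows "4 * card T = card S"
proof -
  have fT: "finite T"
  proof -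
    have "T \<subseteq> Pow S" using assms(2) unfolding til_def by auto
    then show ?thesis using assms(1) finite_subset by blast
  qed
  have tiles: "\<forall>t\<in>T. is_tile 1 4 t" using assms(2) unfolding til_def by auto
  have "card S = card (\<Union>T)" using assms(2) unfolding til_def by auto
  also have "\<dots> = (\<Sum>t\<in>T. card t)"
    apply (rule card_Union_disjoint)
    using assms(2) unfolding til_def pairwise_def disjnt_def
    using fT tiles card_tile by (auto simp: is_tile_def rect_cells_def)
  also have "\<dots> = (\<Sum>t\<in>T. 4)" using tiles card_tile by simp
  finally show ?thesis by simp
qed



definition reg :: "nat \<Rightarrow> (nat \<Rightarrow> nat) \<Rightarrow> (nat \<times> nat) set" where
  "reg n h = {(x,y). x < 5 \<and> h x \<le> y \<and> y < n}"

lemma reg_finite: "finite (reg n h)"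
proof -
  have "reg n h \<subseteq> {..<5} \<times> {..<n}" unfolding reg_def by auto
  then show ?thesis using finite_subset by blast
qed

lemma reg_cong: "(\<forall>i<5. h i = g i) \<Longrightarrow> reg n h = reg n g"
  unfolding reg_def by auto

lemma rc_ne: "rect_cells x0 y0 1 4 \<noteq> rect_cells x0 y0 4 1"
proof
  assume "rect_cells x0 y0 1 4 = rect_cells x0 y0 4 1"
  moreover have "(x0, y0+1) \<in> rect_cells x0 y0 1 4" unfolding rect_cells_def by auto
  ultimately show False unfolding rect_cells_def by auto
qed

lemma cands:
  assumes "x0 < 5" "h x0 = y0" "y0 < n" "\<forall>i<5. y0 \<le> h i" "\<forall>i<x0. y0 < h i"
  shows "{t. is_tile 1 4 t \<and> (x0,y0) \<in> t \<and> t \<subseteq> reg n h} =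
    (if y0 + 4 \<le> n then {rect_cells x0 y0 1 4} else {}) \<union>
    (if x0 \<le> 1 \<and> (\<forall>i. x0 \<le> i \<and> i < x0 + 4 \<longrightarrow> h i = y0) then {rect_cells x0 y0 4 1} else {})"
  (is "?L = ?R")
proof
  show "?L \<subseteq> ?R"
  proof
    fix t assume "t \<in> ?L"
    then have tile: "is_tile 1 4 t" and ct: "(x0,y0) \<in> t" and sub: "t \<subseteq> reg n h" by auto
    from tile obtain x y where "t = rect_cells x y 1 4 \<or> t = rect_cells x y 4 1"
      unfolding is_tile_def by auto
    then show "t \<in> ?R"
    proof
      assume tv: "t = rect_cells x y 1 4"
      then have t: "t = {x} \<times> {y..<y+4}" unfolding rect_cells_def by auto
      have x: "x = x0" and y1: "y \<le> y0" using ct t by auto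
      have "(x0, y) \<in> reg n h" using sub t x by auto
      then have "y0 \<le> y" using assms(2) unfolding reg_def by auto
      then have y: "y = y0" using y1 by simp
      have "(x0, y0+3) \<in> reg n h" using sub t x y by auto
      then have "y0 + 4 \<le> n" unfolding reg_def by auto
      then show "t \<in> ?R" using tv x y by simp
    next
      assume th: "t = rect_cells x y 4 1"
      then have t: "t = {x..<x+4} \<times> {y}" unfolding rect_cells_def by auto
      have y: "y = y0" and x1: "x \<le> x0" "x0 < x + 4" using ct t by auto
      have "(x, y0) \<in> reg n h" using sub t y by auto
      then have hx: "h x \<le> y0" "x < 5" unfolding reg_def by auto
      have x: "x = x0"
      proof (rule ccontr)
        assume "x \<noteq> x0"
        then have "x < x0" using x1 by simp
        then have "y0 < h x" using assms(5) by auto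
        then show False using hx by simp
      qed
      have "(x0+3, y0) \<in> reg n h" using sub t x y by auto
      then have x01: "x0 \<le> 1" unfolding reg_def by auto
      have "h i = y0" if "x0 \<le> i" "i < x0 + 4" for i
      proof -
        have "(i, y0) \<in> reg n h" using sub t x y that by auto
        then have "h i \<le> y0" "i < 5" unfolding reg_def by auto
        then show ?thesis using assms(4) by fastforce
      qed
      then show "t \<in> ?R" using th x y x01 by simp
    qed
  qed
next
  show "?R \<subseteq> ?L"
  proof
    fix t assume tR: "t \<in> ?R"
    show "t \<in> ?L"
    proof (cases "t = rect_cells x0 y0 1 4")
      case True
      then have c: "y0 + 4 \<le> n" using tR rc_ne by (auto split: if_splits)
      have "is_tile 1 4 t" using True unfolding is_tile_def by blast
      moreover have "(x0,y0) \<in> t" using True unfolding rect_cells_def by auto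
      moreover have "t \<subseteq> reg n h" using True c assms(1,2) unfolding rect_cells_def reg_def by auto
      ultimately show ?thesis by simp
    next
      case False
      then have t: "t = rect_cells x0 y0 4 1" and c: "x0 \<le> 1" "\<forall>i. x0 \<le> i \<and> i < x0 + 4 \<longrightarrow> h i = y0"
        using tR by (auto split: if_splits)
      have "is_tile 1 4 t" using t unfolding is_tile_def by blast
      moreover have "(x0,y0) \<in> t" using t unfolding rect_cells_def by auto
      moreover have "t \<subseteq> reg n h"
      proof
        fix p assume "p \<in> t"
        then obtain i where p: "p = (i, y0)" "x0 \<le> i" "i < x0 + 4" using t unfolding rect_cells_def by auto
        have "h i = y0" using c p by auto
        moreover have "i < 5" using c p by simp
        ultimately show "p \<in> reg n h" using p assms(3) unfolding reg_def by simp
      qed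
      ultimately show ?thesis by simp
    qed
  qed
qed

lemma diff_v:
  assumes "h x0 = y0" "\<forall>i<5. hv i = (if i = x0 then y0 + 4 else h i)"
  shows "reg n h - rect_cells x0 y0 1 4 = reg n hv"
proof -
  have "((x,y) \<in> reg n h - rect_cells x0 y0 1 4) = ((x,y) \<in> reg n hv)" for x y
  proof (cases "x = x0")
    case True then show ?thesis using assms unfolding reg_def rect_cells_def by auto
  next
    case False then show ?thesis using assms unfolding reg_def rect_cells_def by auto
  qed
  then show ?thesis by auto
qed

lemma diff_h:
  assumes "\<forall>i. x0 \<le> i \<and> i < x0 + 4 \<longrightarrow> h i = y0"
    "\<forall>i<5. hh i = (if x0 \<le> i \<and> i < x0 + 4 then y0 + 1 else h i)"
  shows "reg n h - rect_cells x0 y0 4 1 = reg n hh"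
proof -
  have "((x,y) \<in> reg n h - rect_cells x0 y0 4 1) = ((x,y) \<in> reg n hh)" for x y
  proof (cases "x0 \<le> x \<and> x < x0 + 4")
    case True
    then have "h x = y0" using assms(1) by blast
    then show ?thesis using True assms(2) unfolding reg_def rect_cells_def by auto
  next
    case False then show ?thesis using assms(2) unfolding reg_def rect_cells_def by auto
  qed
  then show ?thesis by auto
qed

definition C :: "nat \<Rightarrow> (nat \<Rightarrow> nat) \<Rightarrow> nat" where
  "C n h = card (til (reg n h))"

lemma step:
  assumes "x0 < 5" "h x0 = y0" "y0 < n" "\<forall>i<5. y0 \<le> h i" "\<forall>i<x0. y0 < h i"
    "\<forall>i<5. hv i = (if i = x0 then y0 + 4 else h i)"
    "\<forall>i<5. hh i = (if x0 \<le> i \<and> i < x0 + 4 then y0 + 1 else h i)"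
  shows "C n h = (if y0 + 4 \<le> n then C n hv else 0) +
     (if x0 \<le> 1 \<and> (\<forall>i. x0 \<le> i \<and> i < x0 + 4 \<longrightarrow> h i = y0) then C n hh else 0)"
proof -
  have cS: "(x0,y0) \<in> reg n h" using assms(1,2,3) unfolding reg_def by auto
  have ne: "rect_cells x0 y0 1 4 \<noteq> rect_cells x0 y0 4 1"
  proof
    assume "rect_cells x0 y0 1 4 = rect_cells x0 y0 4 1"
    moreover have "(x0, y0+1) \<in> rect_cells x0 y0 1 4" unfolding rect_cells_def by auto
    ultimately show False unfolding rect_cells_def by auto
  qed
  have "C n h = (\<Sum>t\<in>{t. is_tile 1 4 t \<and> (x0,y0) \<in> t \<and> t \<subseteq> reg n h}. card (til (reg n h - t)))"
    unfolding C_def by (rule til_split[OF reg_finite cS])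
  also have "\<dots> = (\<Sum>t\<in>(if y0 + 4 \<le> n then {rect_cells x0 y0 1 4} else {}) \<union>
    (if x0 \<le> 1 \<and> (\<forall>i. x0 \<le> i \<and> i < x0 + 4 \<longrightarrow> h i = y0) then {rect_cells x0 y0 4 1} else {}).
      card (til (reg n h - t)))"
    by (simp only: cands[OF assms(1-5)])
  finally have eq: "C n h = (\<Sum>t\<in>(if y0 + 4 \<le> n then {rect_cells x0 y0 1 4} else {}) \<union>
    (if x0 \<le> 1 \<and> (\<forall>i. x0 \<le> i \<and> i < x0 + 4 \<longrightarrow> h i = y0) then {rect_cells x0 y0 4 1} else {}).
      card (til (reg n h - t)))" .
  have dv: "reg n h - rect_cells x0 y0 1 4 = reg n hv" by (rule diff_v[OF assms(2,6)])
  show ?thesis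
  proof (cases "x0 \<le> 1 \<and> (\<forall>i. x0 \<le> i \<and> i < x0 + 4 \<longrightarrow> h i = y0)")
    case hc: True
    have dh: "reg n h - rect_cells x0 y0 4 1 = reg n hh" using hc assms(7) by (intro diff_h) auto
    show ?thesis
    proof (cases "y0 + 4 \<le> n")
      case c: True
      have s1: "(if y0 + 4 \<le> n then {rect_cells x0 y0 1 4} else {}) = {rect_cells x0 y0 1 4}" using c by simp
      have s2: "(if x0 \<le> 1 \<and> (\<forall>i. x0 \<le> i \<and> i < x0 + 4 \<longrightarrow> h i = y0) then {rect_cells x0 y0 4 1} else {}) = {rect_cells x0 y0 4 1}" using hc by simp
      have "C n h = card (til (reg n h - rect_cells x0 y0 1 4)) + card (til (reg n h - rect_cells x0 y0 4 1))"
        using eq ne unfolding s1 s2 by simp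
      then show ?thesis unfolding if_P[OF hc] if_P[OF c] dv dh C_def by simp
    next
      case c: False
      have s1: "(if y0 + 4 \<le> n then {rect_cells x0 y0 1 4} else {}) = {}" using c by simp
      have s2: "(if x0 \<le> 1 \<and> (\<forall>i. x0 \<le> i \<and> i < x0 + 4 \<longrightarrow> h i = y0) then {rect_cells x0 y0 4 1} else {}) = {rect_cells x0 y0 4 1}" using hc by simp
      have "C n h = card (til (reg n h - rect_cells x0 y0 4 1))"
        using eq unfolding s1 s2 by simp
      then show ?thesis unfolding if_P[OF hc] if_not_P[OF c] dh C_def by simp
    qed
  next
    case hc: False
    show ?thesis
    proof (cases "y0 + 4 \<le> n")
      case c: True
      have s1: "(if y0 + 4 \<le> n then {rect_cells x0 y0 1 4} else {}) = {rect_cells x0 y0 1 4}" using c by simp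
      have s2: "(if x0 \<le> 1 \<and> (\<forall>i. x0 \<le> i \<and> i < x0 + 4 \<longrightarrow> h i = y0) then {rect_cells x0 y0 4 1} else {}) = {}" using hc by simp
      have cc: "C n h = card (til (reg n h - rect_cells x0 y0 1 4))"
        using eq unfolding s1 s2 by simp
      have "(if x0 \<le> 1 \<and> (\<forall>i. x0 \<le> i \<and> i < x0 + 4 \<longrightarrow> h i = y0) then C n hh else 0) = 0"
        using hc by (simp only: if_not_P if_False)
      then show ?thesis using cc c unfolding dv C_def by simp
    next
      case c: False
      have s1: "(if y0 + 4 \<le> n then {rect_cells x0 y0 1 4} else {}) = {}" using c by simp
      have s2: "(if x0 \<le> 1 \<and> (\<forall>i. x0 \<le> i \<and> i < x0 + 4 \<longrightarrow> h i = y0) then {rect_cells x0 y0 4 1} else {}) = {}" using hc by simp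
      have "C n h = 0"
        using eq unfolding s1 s2 by simp
      have "(if x0 \<le> 1 \<and> (\<forall>i. x0 \<le> i \<and> i < x0 + 4 \<longrightarrow> h i = y0) then C n hh else 0) = 0"
        using hc by (simp only: if_not_P if_False)
      then show ?thesis using `C n h = 0` c by simp
    qed
  qed
qed



lemma step':
  assumes "x0 < 5" "h x0 = y0" "y0 < n" "\<forall>i<5. y0 \<le> h i" "\<forall>i<x0. y0 < h i"
    "\<forall>i<5. hv i = (if i = x0 then y0 + 4 else h i)"
    "\<forall>i<5. hh i = (if x0 \<le> i \<and> i < x0 + 4 then y0 + 1 else h i)"
  shows "C n h = (if y0 + 4 \<le> n then C n hv else 0) +
     (if x0 \<le> 1 \<and> h (x0+1) = y0 \<and> h (x0+2) = y0 \<and> h (x0+3) = y0 then C n hh else 0)"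
proof -
  have "(\<forall>i. x0 \<le> i \<and> i < x0 + 4 \<longrightarrow> h i = y0) \<longleftrightarrow> (h (x0+1) = y0 \<and> h (x0+2) = y0 \<and> h (x0+3) = y0)"
  proof
    assume "\<forall>i. x0 \<le> i \<and> i < x0 + 4 \<longrightarrow> h i = y0" then show "h (x0+1) = y0 \<and> h (x0+2) = y0 \<and> h (x0+3) = y0" by simp
  next
    assume a: "h (x0+1) = y0 \<and> h (x0+2) = y0 \<and> h (x0+3) = y0"
    show "\<forall>i. x0 \<le> i \<and> i < x0 + 4 \<longrightarrow> h i = y0"
    proof (intro allI impI)
      fix i assume "x0 \<le> i \<and> i < x0 + 4"
      then have "i = x0 \<or> i = x0+1 \<or> i = x0+2 \<or> i = x0+3" by arith
      then show "h i = y0" using a assms(2) by auto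
    qed
  qed
  then show ?thesis using step[OF assms] by simp
qed

lemma all5: "(\<forall>i<(5::nat). P i) = (P 0 \<and> P 1 \<and> P 2 \<and> P 3 \<and> P 4)"
  by (auto simp: less_Suc_eq numeral_eq_Suc)
lemma all4: "(\<forall>i<(4::nat). P i) = (P 0 \<and> P 1 \<and> P 2 \<and> P 3)"
  by (auto simp: less_Suc_eq numeral_eq_Suc)
lemma all3: "(\<forall>i<(3::nat). P i) = (P 0 \<and> P 1 \<and> P 2)"
  by (auto simp: less_Suc_eq numeral_eq_Suc)
lemma all2: "(\<forall>i<(2::nat). P i) = (P 0 \<and> P 1)"
  by (auto simp: less_Suc_eq numeral_eq_Suc)
lemma all1: "(\<forall>i<(1::nat). P i) = P 0"
  by auto

definition prof :: "nat \<Rightarrow> nat \<Rightarrow> nat \<Rightarrow> nat \<Rightarrow> nat \<Rightarrow> nat \<Rightarrow> nat" where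
  "prof a0 a1 a2 a3 a4 i = (if i = 0 then a0 else if i = 1 then a1 else if i = 2 then a2 else if i = 3 then a3 else a4)"

lemmas stepsimps = prof_def all5 all4 all3 all2 all1

fun s :: "nat \<Rightarrow> nat \<Rightarrow> nat" where
  "s d m = (if d = 0 then (if m = 0 then 1 else (if 4 \<le> m then s 0 (m-4) else 0) + 2 * (if 1 \<le> m then s 3 (m-1) else 0))
           else (if 4 \<le> m then s d (m-4) else 0) + (if 1 \<le> m then s (d-1) (m-1) else 0))"

declare s.simps[simp del]

lemma s00: "s 0 0 = 1" by (simp add: s.simps)
lemma s0: "1 \<le> m \<Longrightarrow> s 0 m = (if 4 \<le> m then s 0 (m-4) else 0) + 2 * s 3 (m-1)"
  by (subst s.simps) simp
lemma sd: "1 \<le> d \<Longrightarrow> s d m = (if 4 \<le> m then s d (m-4) else 0) + (if 1 \<le> m then s (d-1) (m-1) else 0)"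
  by (subst s.simps) simp
lemma s_small: "d \<le> 3 \<Longrightarrow> m < d \<Longrightarrow> s d m = 0"
proof -
  assume "d \<le> 3" "m < d"
  then have "(d,m) \<in> {(1,0),(2,0),(2,1),(3,0),(3,1),(3,2)}" by auto
  moreover have "s 1 0 = 0" "s 2 0 = 0" "s 3 0 = 0" by (simp_all add: sd)
  moreover have "s 2 1 = 0" using sd[of 2 1] \<open>s 1 0 = 0\<close> by simp
  moreover have "s 3 1 = 0" using sd[of 3 1] \<open>s 2 0 = 0\<close> by simp
  moreover have "s 3 2 = 0" using sd[of 3 2] \<open>s 2 1 = 0\<close> by simp
  ultimately show ?thesis by auto
qed

lemma reg_empty: "reg n (prof n n n n n) = {}"
  unfolding reg_def prof_def by auto

lemma C_empty: "C n (prof n n n n n) = 1"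
  unfolding C_def reg_empty til_empty by simp



lemma LF1: "b < n \<Longrightarrow> C n (prof b b b b b) = (if b+4 \<le> n then C n (prof (b+4) b b b b) else 0) + C n (prof (b+1) (b+1) (b+1) (b+1) b)"
  using step'[of 0 "prof b b b b b" b n "prof (b+4) b b b b" "prof (b+1) (b+1) (b+1) (b+1) b"]
  by (simp add: stepsimps)

lemma LF2: "b < n \<Longrightarrow> C n (prof (b+1) (b+1) (b+1) (b+1) b) = (if b+4 \<le> n then C n (prof (b+1) (b+1) (b+1) (b+1) (b+4)) else 0)"
  using step'[of 4 "prof (b+1) (b+1) (b+1) (b+1) b" b n "prof (b+1) (b+1) (b+1) (b+1) (b+4)" "prof (b+1) (b+1) (b+1) (b+1) (b+1)"]
  by (simp add: stepsimps)

lemma LP1: "1 \<le> k \<Longrightarrow> b < n \<Longrightarrow> C n (prof (b+k) b b b b) = (if b+4 \<le> n then C n (prof (b+k) (b+4) b b b) else 0) + C n (prof (b+k) (b+1) (b+1) (b+1) (b+1))"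
  using step'[of 1 "prof (b+k) b b b b" b n "prof (b+k) (b+4) b b b" "prof (b+k) (b+1) (b+1) (b+1) (b+1)"]
  by (simp add: stepsimps)

lemma LP2: "1 \<le> k \<Longrightarrow> b + 4 \<le> n \<Longrightarrow> C n (prof (b+k) (b+4) b b b) = C n (prof (b+k) (b+4) (b+4) b b)"
  using step'[of 2 "prof (b+k) (b+4) b b b" b n "prof (b+k) (b+4) (b+4) b b" "prof (b+k) (b+4) (b+1) (b+1) (b+1)"]
  by (simp add: stepsimps)

lemma LP3: "1 \<le> k \<Longrightarrow> b + 4 \<le> n \<Longrightarrow> C n (prof (b+k) (b+4) (b+4) b b) = C n (prof (b+k) (b+4) (b+4) (b+4) b)"
  using step'[of 3 "prof (b+k) (b+4) (b+4) b b" b n "prof (b+k) (b+4) (b+4) (b+4) b" "prof (b+k) (b+4) (b+4) (b+1) (b+1)"]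
  by (simp add: stepsimps)

lemma LP4: "1 \<le> k \<Longrightarrow> b + 4 \<le> n \<Longrightarrow> C n (prof (b+k) (b+4) (b+4) (b+4) b) = C n (prof (b+k) (b+4) (b+4) (b+4) (b+4))"
  using step'[of 4 "prof (b+k) (b+4) (b+4) (b+4) b" b n "prof (b+k) (b+4) (b+4) (b+4) (b+4)" "prof (b+k) (b+4) (b+4) (b+4) (b+1)"]
  by (simp add: stepsimps)

lemma LP5:
  assumes "1 \<le> k" "k \<le> 3" "b + 4 \<le> n"
  shows "C n (prof (b+k) (b+4) (b+4) (b+4) (b+4)) = (if b+k+4 \<le> n then C n (prof (b+k+4) (b+4) (b+4) (b+4) (b+4)) else 0)"
proof -
  have "b + k < n" "b + k < b + 4" "b + k \<noteq> b + 4" using assms by simp_all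
  then show ?thesis
  using step'[of 0 "prof (b+k) (b+4) (b+4) (b+4) (b+4)" "b+k" n "prof (b+k+4) (b+4) (b+4) (b+4) (b+4)" "prof (b+k+1) (b+k+1) (b+k+1) (b+k+1) (b+4)"] assms
  by (simp add: stepsimps)
qed

lemma LA1:
  assumes "b < n" "1 \<le> d"
  shows "C n (prof b b b b (b+d)) = (if b+4 \<le> n then C n (prof (b+4) b b b (b+d)) else 0) + C n (prof (b+1) (b+1) (b+1) (b+1) (b+d))"
  using step'[of 0 "prof b b b b (b+d)" b n "prof (b+4) b b b (b+d)" "prof (b+1) (b+1) (b+1) (b+1) (b+d)"] assms
  by (simp add: stepsimps)

lemma LA2: "1 \<le> d \<Longrightarrow> b + 4 \<le> n \<Longrightarrow> C n (prof (b+4) b b b (b+d)) = C n (prof (b+4) (b+4) b b (b+d))"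
  using step'[of 1 "prof (b+4) b b b (b+d)" b n "prof (b+4) (b+4) b b (b+d)" "prof (b+4) (b+1) (b+1) (b+1) (b+1)"]
  by (simp add: stepsimps)

lemma LA3: "1 \<le> d \<Longrightarrow> b + 4 \<le> n \<Longrightarrow> C n (prof (b+4) (b+4) b b (b+d)) = C n (prof (b+4) (b+4) (b+4) b (b+d))"
  using step'[of 2 "prof (b+4) (b+4) b b (b+d)" b n "prof (b+4) (b+4) (b+4) b (b+d)" "prof (b+4) (b+4) (b+1) (b+1) (b+1)"]
  by (simp add: stepsimps)

lemma LA4: "1 \<le> d \<Longrightarrow> b + 4 \<le> n \<Longrightarrow> C n (prof (b+4) (b+4) (b+4) b (b+d)) = C n (prof (b+4) (b+4) (b+4) (b+4) (b+d))"
  using step'[of 3 "prof (b+4) (b+4) (b+4) b (b+d)" b n "prof (b+4) (b+4) (b+4) (b+4) (b+d)" "prof (b+4) (b+4) (b+4) (b+1) (b+1)"]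
  by (simp add: stepsimps)

lemma LA5:
  assumes "b + 4 \<le> n" "1 \<le> d" "d \<le> 3"
  shows "C n (prof (b+4) (b+4) (b+4) (b+4) (b+d)) = (if b+d+4 \<le> n then C n (prof (b+4) (b+4) (b+4) (b+4) (b+d+4)) else 0)"
proof -
  have "b + d < n" using assms by simp
  show ?thesis
  using step'[of 4 "prof (b+4) (b+4) (b+4) (b+4) (b+d)" "b+d" n "prof (b+4) (b+4) (b+4) (b+4) (b+d+4)" "prof (b+4) (b+4) (b+4) (b+4) (b+d+1)"] assms
  by (simp add: stepsimps \<open>b + d < n\<close>)
qed



lemma main:
  "n - b = m \<Longrightarrow> b \<le> n \<Longrightarrow>
   (\<forall>d. d \<le> 3 \<longrightarrow> b + d \<le> n \<longrightarrow> C n (prof b b b b (b+d)) = s d (n-b)) \<and>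
   (\<forall>k. k \<le> 3 \<longrightarrow> b + k \<le> n \<longrightarrow> C n (prof (b+k) b b b b) = s k (n-b))"
proof (induction m arbitrary: b rule: less_induct)
  case (less m)
  have IH: "(\<forall>d. d \<le> 3 \<longrightarrow> b' + d \<le> n \<longrightarrow> C n (prof b' b' b' b' (b'+d)) = s d (n-b')) \<and>
   (\<forall>k. k \<le> 3 \<longrightarrow> b' + k \<le> n \<longrightarrow> C n (prof (b'+k) b' b' b' b') = s k (n-b'))"
    if "b < b'" "b' \<le> n" for b'
    using less.IH[of "n - b'" b'] that less.prems by auto
  have IHA: "C n (prof b' b' b' b' (b'+d)) = s d (n-b')" if "b < b'" "b' + d \<le> n" "d \<le> 3" for b' d
    using IH[of b'] that by auto
  have IHP: "C n (prof (b'+k) b' b' b' b') = s k (n-b')" if "b < b'" "b' + k \<le> n" "k \<le> 3" for b' k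
    using IH[of b'] that by auto
  have F: "C n (prof b b b b b) = s 0 (n-b)"
  proof (cases "b = n")
    case True then show ?thesis using C_empty s00 by simp
  next
    case False
    then have bn: "b < n" using less.prems by simp
    have e1: "C n (prof (b+1) (b+1) (b+1) (b+1) b) = (if b+4 \<le> n then s 3 (n - b - 1) else 0)"
    proof (cases "b + 4 \<le> n")
      case True
      have "C n (prof (b+1) (b+1) (b+1) (b+1) (b+1+3)) = s 3 (n - (b+1))"
        by (rule IHA) (use True in auto)
      moreover have "b + 1 + 3 = b + 4" by simp
      ultimately have X: "C n (prof (b+1) (b+1) (b+1) (b+1) (b+4)) = s 3 (n - (b+1))" by (simp only:)
      have "n - (b+1) = n - b - 1" by simp
      with X have "C n (prof (b+1) (b+1) (b+1) (b+1) (b+4)) = s 3 (n - b - 1)" by (simp only:)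
      then show ?thesis using LF2[OF bn] True by simp
    next
      case False then show ?thesis using LF2[OF bn] by simp
    qed
    have e2: "C n (prof (b+4) b b b b) = s 0 (n - b - 4) + s 3 (n - b - 1)" if b4: "b + 4 \<le> n"
    proof -
      have a: "C n (prof (b+4) (b+1) (b+1) (b+1) (b+1)) = s 3 (n - b - 1)"
        using IHP[of "b+1" 3] b4 by (simp add: ac_simps)
      have b: "C n (prof (b+4) (b+4) (b+4) (b+4) (b+4)) = s 0 (n - b - 4)"
        using IHA[of "b+4" 0] b4 by simp
      show ?thesis using LP1[of 4 b n] LP2[of 4 b n] LP3[of 4 b n] LP4[of 4 b n] a b b4 by simp
    qed
    have m1: "1 \<le> n - b" using bn by simp
    show ?thesis
    proof (cases "b + 4 \<le> n")
      case True
      have "4 \<le> n - b" using True by simp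
      then show ?thesis using LF1[OF bn] e1 e2[OF True] True s0[OF m1] by (simp add: diff_diff_add)
    next
      case False
      then have "s 3 (n - b - 1) = 0" using bn by (intro s_small) auto
      then show ?thesis using LF1[OF bn] e1 False s0[OF m1] by simp
    qed
  qed
  have A: "C n (prof b b b b (b+d)) = s d (n-b)" if d: "1 \<le> d" "d \<le> 3" and bd: "b + d \<le> n" for d
  proof -
    have bn: "b < n" using d bd by simp
    have e1: "C n (prof (b+1) (b+1) (b+1) (b+1) (b+d)) = s (d-1) (n - b - 1)"
    proof -
      have "C n (prof (b+1) (b+1) (b+1) (b+1) (b+1+(d-1))) = s (d-1) (n - (b+1))"
        by (rule IHA) (use d bd in auto)
      moreover have "b + 1 + (d - 1) = b + d" using d by simp
      ultimately show ?thesis by simp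
    qed
    have sdd: "s d (n-b) = (if 4 \<le> n - b then s d (n-b-4) else 0) + s (d-1) (n-b-1)"
      using sd[OF d(1), of "n-b"] bn by simp
    show ?thesis
    proof (cases "b + 4 \<le> n")
      case b4: True
      have chain: "C n (prof (b+4) b b b (b+d)) = (if b+d+4 \<le> n then C n (prof (b+4) (b+4) (b+4) (b+4) (b+d+4)) else 0)"
        using LA2[OF d(1) b4] LA3[OF d(1) b4] LA4[OF d(1) b4] LA5[OF b4 d] by simp
      have e2: "C n (prof (b+4) b b b (b+d)) = s d (n - b - 4)"
      proof (cases "b + d + 4 \<le> n")
        case True
        have "C n (prof (b+4) (b+4) (b+4) (b+4) (b+4+d)) = s d (n - (b+4))"
          by (rule IHA) (use True d in auto)
        then show ?thesis using chain True by (simp add: ac_simps diff_diff_add)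
      next
        case False
        have "s d (n - b - 4) = 0" using False d by (intro s_small) auto
        then show ?thesis using chain False by simp
      qed
      have "4 \<le> n - b" using b4 by simp
      then show ?thesis using LA1[OF bn d(1)] e1 e2 b4 sdd by (simp add: diff_diff_add)
    next
      case False
      then have "\<not> 4 \<le> n - b" by simp
      then show ?thesis using LA1[OF bn d(1)] e1 sdd False by simp
    qed
  qed
  have P: "C n (prof (b+k) b b b b) = s k (n-b)" if d: "1 \<le> k" "k \<le> 3" and bd: "b + k \<le> n" for k
  proof -
    have bn: "b < n" using d bd by simp
    have e1: "C n (prof (b+k) (b+1) (b+1) (b+1) (b+1)) = s (k-1) (n - b - 1)"
    proof -
      have "C n (prof (b+1+(k-1)) (b+1) (b+1) (b+1) (b+1)) = s (k-1) (n - (b+1))"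
        by (rule IHP) (use d bd in auto)
      moreover have "b + 1 + (k - 1) = b + k" using d by simp
      ultimately show ?thesis by simp
    qed
    have sdd: "s k (n-b) = (if 4 \<le> n - b then s k (n-b-4) else 0) + s (k-1) (n-b-1)"
      using sd[OF d(1), of "n-b"] bn by simp
    show ?thesis
    proof (cases "b + 4 \<le> n")
      case b4: True
      have chain: "C n (prof (b+k) (b+4) b b b) = (if b+k+4 \<le> n then C n (prof (b+k+4) (b+4) (b+4) (b+4) (b+4)) else 0)"
        using LP2[OF d(1) b4] LP3[OF d(1) b4] LP4[OF d(1) b4] LP5[OF d b4] by simp
      have e2: "C n (prof (b+k) (b+4) b b b) = s k (n - b - 4)"
      proof (cases "b + k + 4 \<le> n")
        case True
        have "C n (prof (b+4+k) (b+4) (b+4) (b+4) (b+4)) = s k (n - (b+4))"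
          by (rule IHP) (use True d in auto)
        then show ?thesis using chain True by (simp add: ac_simps diff_diff_add)
      next
        case False
        have "s k (n - b - 4) = 0" using False d by (intro s_small) auto
        then show ?thesis using chain False by simp
      qed
      have "4 \<le> n - b" using b4 by simp
      then show ?thesis using LP1[OF d(1) bn] e1 e2 b4 sdd by (simp add: diff_diff_add)
    next
      case False
      then have "\<not> 4 \<le> n - b" by simp
      then show ?thesis using LP1[OF d(1) bn] e1 sdd False by simp
    qed
  qed
  show ?case
  proof (intro conjI allI impI)
    fix d assume "d \<le> 3" "b + d \<le> n"
    then show "C n (prof b b b b (b+d)) = s d (n-b)"
      using F A by (cases "d = 0") auto
  next
    fix k assume "k \<le> 3" "b + k \<le> n"
    then show "C n (prof (b+k) b b b b) = s k (n-b)"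
      using F P by (cases "k = 0") auto
  qed
qed

lemma count_board: "card {T. is_tiling 1 4 5 n T} = s 0 n"
proof -
  have "reg n (prof 0 0 0 0 0) = board 5 n"
    unfolding board_def reg_def prof_def rect_cells_def by auto
  then have "{T. is_tiling 1 4 5 n T} = til (reg n (prof 0 0 0 0 0))"
    unfolding is_tiling_def til_def by simp
  then have "card {T. is_tiling 1 4 5 n T} = C n (prof 0 0 0 0 0)" unfolding C_def by simp
  also have "\<dots> = s 0 n" using main[of n 0 n] by auto
  finally show ?thesis .
qed



definition SF :: "nat \<Rightarrow> rat fps" where "SF d = Abs_fps (\<lambda>m. of_nat (s d m))"

lemma rec0: "SF 0 = 1 + fps_X^4 * SF 0 + fps_X * SF 3 + fps_X * SF 3"
proof (rule fps_ext)
  fix m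
  show "fps_nth (SF 0) m = fps_nth (1 + fps_X^4 * SF 0 + fps_X * SF 3 + fps_X * SF 3) m"
  proof (cases "m = 0")
    case True then show ?thesis by (simp add: SF_def fps_X_power_mult_nth s00)
  next
    case False
    then have "1 \<le> m" by simp
    then show ?thesis using False by (simp add: SF_def fps_X_power_mult_nth s0[of m] not_less numeral_fps_const)
  qed
qed

lemma recd: "1 \<le> d \<Longrightarrow> SF d = fps_X^4 * SF d + fps_X * SF (d-1)"
proof (rule fps_ext)
  fix m assume d: "1 \<le> d"
  show "fps_nth (SF d) m = fps_nth (fps_X^4 * SF d + fps_X * SF (d-1)) m"
    using sd[OF d, of m] by (simp add: SF_def fps_X_power_mult_nth not_less)
qed

lemma Frel: "SF 0 * ((1 - fps_X^4)^4 - 2 * fps_X^4) = (1 - fps_X^4)^3"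
proof -
  have r1: "SF 1 = fps_X^4 * SF 1 + fps_X * SF 0" using recd[of 1] by simp
  have r2: "SF 2 = fps_X^4 * SF 2 + fps_X * SF 1" using recd[of 2] by simp
  have r3: "SF 3 = fps_X^4 * SF 3 + fps_X * SF 2" using recd[of 3] by simp
  have r0: "SF 0 = 1 + fps_X^4 * SF 0 + fps_X * SF 3 + fps_X * SF 3" by (rule rec0)
  show ?thesis using r0 r1 r2 r3 by algebra
qed



lemma card_board: "card (board 5 n) = 5 * n"
  unfolding board_def rect_cells_def by (simp add: card_cartesian_product)

lemma T_eq: "T14_5 N = (if 5 dvd N then s 0 (4 * (N div 5)) else 0)"
proof (cases "5 dvd N")
  case True
  then obtain k where N: "N = 5 * k" by auto
  have d: "5 dvd (4 * N)" using True by simp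
  have n: "4 * N div 5 = 4 * k" using N by simp
  have "{T. is_tiling 1 4 5 (4*k) T \<and> card T = N} = {T. is_tiling 1 4 5 (4*k) T}"
  proof -
    have "card T = N" if "is_tiling 1 4 5 (4*k) T" for T
    proof -
      have "T \<in> til (board 5 (4*k))" using that unfolding is_tiling_def til_def by simp
      then have "4 * card T = card (board 5 (4*k))"
        by (rule til_card[rotated]) (simp add: board_def rect_cells_def)
      then show ?thesis using N card_board by simp
    qed
    then show ?thesis by auto
  qed
  then show ?thesis unfolding T14_5_def using d n True N count_board by simp
next
  case False
  then have "\<not> 5 dvd (4 * N)" by presburger
  then show ?thesis unfolding T14_5_def using False by simp
qed

definition ff :: "nat \<Rightarrow> rat" where "ff m = of_nat (s 0 m)"
definition gg :: "nat \<Rightarrow> rat" where "gg N = of_nat (T14_5 N)"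

lemma gg_eq: "gg N = (if 5 dvd N then ff (4 * (N div 5)) else 0)"
  unfolding gg_def ff_def T_eq by simp

lemma gk: "gg (5*k - 5*j) = ff (4*k - 4*j)"
proof -
  have "5*k - 5*j = 5 * (k - j)" "4*k - 4*j = 4 * (k - j)" by (simp_all add: diff_mult_distrib2)
  then show ?thesis by (simp add: gg_eq)
qed

definition R4 :: "nat \<Rightarrow> rat" where
  "R4 m = (if m = 0 then 1 else 0) - 3 * (if m = 4 then 1 else 0) + 3 * (if m = 8 then 1 else 0) - (if m = 12 then 1 else 0)"
definition R5 :: "nat \<Rightarrow> rat" where
  "R5 m = (if m = 0 then 1 else 0) - 3 * (if m = 5 then 1 else 0) + 3 * (if m = 10 then 1 else 0) - (if m = 15 then 1 else 0)"

lemma nmul: "fps_nth (numeral k * f) n = numeral k * fps_nth f n"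
  by (simp add: numeral_fps_const)

lemma SFn: "fps_nth (SF 0) = ff"
  by (rule ext) (simp add: SF_def ff_def)

lemma cf: "ff m - 6 * (if m < 4 then 0 else ff (m-4)) + 6 * (if m < 8 then 0 else ff (m-8))
   - 4 * (if m < 12 then 0 else ff (m-12)) + (if m < 16 then 0 else ff (m-16)) = R4 m"
proof -
  have e: "SF 0 - 6 * (fps_X^4 * SF 0) + 6 * (fps_X^8 * SF 0) - 4 * (fps_X^12 * SF 0) + fps_X^16 * SF 0
     = 1 - 3 * fps_X^4 + 3 * fps_X^8 - fps_X^12"
  proof -
    have "SF 0 - 6 * (fps_X^4 * SF 0) + 6 * (fps_X^8 * SF 0) - 4 * (fps_X^12 * SF 0) + fps_X^16 * SF 0
       = SF 0 * ((1 - fps_X^4)^4 - 2 * fps_X^4)" by algebra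
    also have "\<dots> = (1 - fps_X^4)^3" by (rule Frel)
    also have "\<dots> = 1 - 3 * fps_X^4 + 3 * fps_X^8 - (fps_X^12 :: rat fps)" by algebra
    finally show ?thesis .
  qed
  have "fps_nth (SF 0 - 6 * (fps_X^4 * SF 0) + 6 * (fps_X^8 * SF 0) - 4 * (fps_X^12 * SF 0) + fps_X^16 * SF 0) m
     = fps_nth (1 - 3 * fps_X^4 + 3 * fps_X^8 - fps_X^12 :: rat fps) m" using e by simp
  then show ?thesis
    by (simp only: fps_add_nth fps_sub_nth nmul fps_X_power_mult_nth SFn fps_one_nth fps_X_power_nth R4_def mult_1_right)
qed

lemma cg: "gg N - 6 * (if N < 5 then 0 else gg (N-5)) + 6 * (if N < 10 then 0 else gg (N-10))
   - 4 * (if N < 15 then 0 else gg (N-15)) + (if N < 20 then 0 else gg (N-20)) = R5 N"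
proof (cases "5 dvd N")
  case True
  then obtain k where N: "N = 5 * k" by auto
  have t0: "gg (5*k) = ff (4*k)" using gk[of k 0] by simp
  have t1: "(if 5*k < 5 then 0 else gg (5*k - 5)) = (if 4*k < 4 then 0 else ff (4*k - 4))"
    using gk[of k 1] by simp
  have t2: "(if 5*k < 10 then 0 else gg (5*k - 10)) = (if 4*k < 8 then 0 else ff (4*k - 8))"
    using gk[of k 2] by simp
  have t3: "(if 5*k < 15 then 0 else gg (5*k - 15)) = (if 4*k < 12 then 0 else ff (4*k - 12))"
    using gk[of k 3] by simp
  have t4: "(if 5*k < 20 then 0 else gg (5*k - 20)) = (if 4*k < 16 then 0 else ff (4*k - 16))"
    using gk[of k 4] by simp
  have r: "R5 (5*k) = R4 (4*k)" unfolding R4_def R5_def by auto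
  show ?thesis unfolding N t0 t1 t2 t3 t4 r by (rule cf)
next
  case False
  have z: "gg M = 0" if "\<not> 5 dvd M" for M using that by (simp add: gg_eq)
  have "N \<noteq> 0" using False by (metis dvd_0_right)
  have "\<not> 5 dvd (N - 5)" if "N \<ge> 5" using False that by presburger
  moreover have "\<not> 5 dvd (N - 10)" if "N \<ge> 10" using False that by presburger
  moreover have "\<not> 5 dvd (N - 15)" if "N \<ge> 15" using False that by presburger
  moreover have "\<not> 5 dvd (N - 20)" if "N \<ge> 20" using False that by presburger
  moreover have "R5 N = 0" using False \<open>N \<noteq> 0\<close> unfolding R5_def by auto
  ultimately show ?thesis using z[OF False] z by (auto simp: not_less)
qed

theorem mainTheorem4:
  shows "Abs_fps (\<lambda>N. of_nat (T14_5 N) :: rat) =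
    (1 - fps_X ^ 5) ^ 3 /
    (1 - 6 * fps_X ^ 5 + 6 * fps_X ^ 10 - 4 * fps_X ^ 15 + fps_X ^ 20)"
proof -
  define G where "G = Abs_fps (\<lambda>N. of_nat (T14_5 N) :: rat)"
  define Q :: "rat fps" where "Q = 1 - 6 * fps_X ^ 5 + 6 * fps_X ^ 10 - 4 * fps_X ^ 15 + fps_X ^ 20"
  have Gn: "fps_nth G = gg" by (rule ext) (simp add: G_def gg_def)
  have GQ: "G * Q = (1 - fps_X ^ 5) ^ 3"
  proof -
    have a: "G * Q = G - 6 * (fps_X^5 * G) + 6 * (fps_X^10 * G) - 4 * (fps_X^15 * G) + fps_X^20 * G"
      unfolding Q_def by algebra
    have b: "(1 - fps_X ^ 5) ^ 3 = 1 - 3 * fps_X^5 + 3 * fps_X^10 - (fps_X^15 :: rat fps)" by algebra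
    have "G - 6 * (fps_X^5 * G) + 6 * (fps_X^10 * G) - 4 * (fps_X^15 * G) + fps_X^20 * G
       = 1 - 3 * fps_X^5 + 3 * fps_X^10 - (fps_X^15 :: rat fps)"
    proof (rule fps_ext)
      fix N
      show "fps_nth (G - 6 * (fps_X^5 * G) + 6 * (fps_X^10 * G) - 4 * (fps_X^15 * G) + fps_X^20 * G) N
       = fps_nth (1 - 3 * fps_X^5 + 3 * fps_X^10 - (fps_X^15 :: rat fps)) N"
        using cg[of N] by (simp only: fps_add_nth fps_sub_nth nmul fps_X_power_mult_nth Gn fps_one_nth fps_X_power_nth R5_def mult_1_right)
    qed
    then show ?thesis using a b by simp
  qed
  have Q0: "fps_nth Q 0 \<noteq> 0" unfolding Q_def by simp
  have "(1 - fps_X ^ 5) ^ 3 / Q = G * Q * inverse Q" using GQ fps_divide_unit[OF Q0] by simp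
  also have "\<dots> = G" using inverse_mult_eq_1[OF Q0] by (simp add: mult.assoc mult.commute)
  finally show ?thesis unfolding G_def Q_def by simp
qed

end
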